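(* Let $p>2$ be a prime, $n\ge1$, $A$ a finite abelian $p$-group and $G$ a group containing $A$ as a normal subgroup with $G/A\cong\mathbb{Z}_{p^n}$, generated by the image of an element $t\in G$. If $[e]_\varphi$ is a subgroup of $G$ for every $\varphi\in{\rm Aut}\,G$, then $t^{-1}at=a$ for every $a\in\Omega_1(A)$.
   Context: For an automorphism $\varphi$ of $G$, $[e]_\varphi=\{z^{-1}\varphi(z)\mid z\in G\}$. $\Omega_k(A)=\{a\in A\mid a^{p^k}=e\}$. *)

theory Defs
  imports "HOL-Algebra.Algebra"
begin

definition twisted_class :: "('a, 'b) monoid_scheme \<Rightarrow> ('a \<Rightarrow> 'a) \<Rightarrow> 'a set" where
  "twisted_class G \<phi> = {inv\<^bsub>G\<^esub> z \<otimes>\<^bsub>G\<^esub> \<phi> z | z. z \<in> carrier G}"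

definition Omega :: "('a, 'b) monoid_scheme \<Rightarrow> nat \<Rightarrow> nat \<Rightarrow> 'a set \<Rightarrow> 'a set" where
  "Omega G p k A = {a \<in> A. a [^]\<^bsub>G\<^esub> (p ^ k) = \<one>\<^bsub>G\<^esub>}"

end

theory Submission
  imports Defs
begin


lemma funpow_mult_period:
  assumes "(f ^^ r) x = x"
  shows "(f ^^ (r * k + s)) x = (f ^^ s) x"
proof (induction k)
  case 0 then show ?case by simp
next
  case (Suc k)
  have e: "r * Suc k + s = (r * k + s) + r" by simp
  have "(f ^^ (r * Suc k + s)) x = (f ^^ (r * k + s)) ((f ^^ r) x)"
    by (simp only: e funpow_add o_apply)
  then show ?case using Suc assms by simp
qed

lemma orbit_card_dvd:
  fixes f :: "'a \<Rightarrow> 'a" and p :: nat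
  assumes "Factorial_Ring.prime p" "(f ^^ (p ^ e)) x = x" "f x \<noteq> x"
  shows "finite (range (\<lambda>i. (f ^^ i) x)) \<and> p dvd card (range (\<lambda>i. (f ^^ i) x))"
proof -
  define P where "P = (\<lambda>r. 0 < r \<and> (f ^^ r) x = x)"
  have Pq: "P (p ^ e)" using assms prime_gt_0_nat unfolding P_def by auto
  define r where "r = Least P"
  have Pr: "P r" unfolding r_def using Pq by (rule LeastI)
  have rmin: "\<And>s. 0 < s \<Longrightarrow> s < r \<Longrightarrow> (f ^^ s) x \<noteq> x"
    using not_less_Least unfolding r_def P_def by blast
  have r0: "0 < r" and rx: "(f ^^ r) x = x" using Pr P_def by auto
  have per: "\<And>i. (f ^^ i) x = (f ^^ (i mod r)) x"
    using funpow_mult_period[OF rx, of "i div r" "i mod r" for i]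
    by (metis div_mult_mod_eq mult.commute)
  have O: "range (\<lambda>i. (f ^^ i) x) = (\<lambda>i. (f ^^ i) x) ` {..<r}"
  proof
    show "range (\<lambda>i. (f ^^ i) x) \<subseteq> (\<lambda>i. (f ^^ i) x) ` {..<r}"
    proof clarify
      fix i
      have "i mod r \<in> {..<r}" using r0 by simp
      then show "(f ^^ i) x \<in> (\<lambda>i. (f ^^ i) x) ` {..<r}" by (subst per) (rule imageI)
    qed
  qed auto
  have inj: "inj_on (\<lambda>i. (f ^^ i) x) {..<r}"
  proof (rule inj_onI)
    have aux: "\<And>i j. i < j \<Longrightarrow> j < r \<Longrightarrow> (f ^^ i) x = (f ^^ j) x \<Longrightarrow> False"
    proof -
      fix i j assume ij: "i < j" "j < r" "(f ^^ i) x = (f ^^ j) x"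
      have "(f ^^ (r - j + i)) x = (f ^^ (r - j)) ((f ^^ i) x)"
        by (simp add: funpow_add)
      also have "\<dots> = (f ^^ (r - j)) ((f ^^ j) x)" using ij by simp
      also have "\<dots> = (f ^^ (r - j + j)) x" by (simp add: funpow_add)
      also have "\<dots> = x" using ij rx by simp
      finally have fx: "(f ^^ (r - j + i)) x = x" .
      have "0 < r - j + i" "r - j + i < r" using ij by auto
      from rmin[OF this] fx show False by simp
    qed
    fix i j assume "i \<in> {..<r}" "j \<in> {..<r}" "(f ^^ i) x = (f ^^ j) x"
    then show "i = j" using aux by (metis lessThan_iff linorder_neqE_nat)
  qed
  have card: "card (range (\<lambda>i. (f ^^ i) x)) = r"
    using O inj card_image by fastforce
  have "(f ^^ (p ^ e mod r)) x = x" using per assms(2) by metis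
  then have "p ^ e mod r = 0" using rmin mod_less_divisor r0 by blast
  then have "r dvd p ^ e" by auto
  then obtain i where i: "r = p ^ i" using divides_primepow_nat assms(1) by blast
  have "r \<noteq> 1" using rx assms(3) by auto
  then have "i \<noteq> 0" using i by auto
  then have "p dvd r" using i by simp
  then show ?thesis using card O by simp
qed

lemma fixpoint_mod_p:
  fixes f :: "'a \<Rightarrow> 'a" and W :: "'a set" and p :: nat
  assumes fin: "finite W" and inv: "f ` W \<subseteq> W" and per: "\<forall>x\<in>W. (f ^^ (p ^ e)) x = x"
    and pr: "Factorial_Ring.prime p" and dv: "p dvd card W" and x0: "x0 \<in> W" "f x0 = x0"
  shows "\<exists>x\<in>W. x \<noteq> x0 \<and> f x = x"
proof (rule ccontr)
  assume H: "\<not> ?thesis"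
  define W' where "W' = W - {x0}"
  define Orb where "Orb = (\<lambda>x. range (\<lambda>i. (f ^^ i) x))"
  have inW: "\<And>x i. x \<in> W \<Longrightarrow> (f ^^ i) x \<in> W"
  proof -
    fix x i assume "x \<in> W" then show "(f ^^ i) x \<in> W"
      by (induction i) (use inv in auto)
  qed
  have x0f: "\<And>i. (f ^^ i) x0 = x0"
  proof -
    fix i show "(f ^^ i) x0 = x0" by (induction i) (use x0 in auto)
  qed
  have qpos: "p ^ e > 0" using pr prime_gt_0_nat by auto
  have inW': "\<And>x i. x \<in> W' \<Longrightarrow> (f ^^ i) x \<in> W'"
  proof -
    fix x i assume x: "x \<in> W'"
    show "(f ^^ i) x \<in> W'"
    proof (rule ccontr)
      assume "(f ^^ i) x \<notin> W'"
      then have e: "(f ^^ i) x = x0" using inW x W'_def by auto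
      have "(f ^^ (p ^ e * i + 0)) x = x"
        by (rule trans[OF funpow_mult_period]) (use per x W'_def in auto)
      moreover have "p ^ e * i = (p ^ e * i - i) + i" using qpos by (cases "p ^ e") auto
      ultimately have "(f ^^ (p ^ e * i - i)) ((f ^^ i) x) = x"
        by (metis add_0_right funpow_add o_apply)
      then show False using e x0f x W'_def by auto
    qed
  qed
  have Ox: "\<And>x. x \<in> W' \<Longrightarrow> finite (Orb x) \<and> p dvd card (Orb x)"
    unfolding Orb_def
    by (rule orbit_card_dvd[OF pr, where f=f and e=e]) (use per H W'_def in auto)
  have Osub: "\<And>x. x \<in> W' \<Longrightarrow> Orb x \<subseteq> W'" unfolding Orb_def using inW' by auto
  have Oeq: "\<And>x y. x \<in> W \<Longrightarrow> y \<in> Orb x \<Longrightarrow> Orb y = Orb x"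
  proof -
    fix x y assume x: "x \<in> W" and y: "y \<in> Orb x"
    then obtain i where i: "y = (f ^^ i) x" unfolding Orb_def by auto
    have "Orb y \<subseteq> Orb x" unfolding Orb_def i by (auto, metis comp_apply funpow_add rangeI)
    moreover have "x \<in> Orb y"
    proof -
      have "(f ^^ (p ^ e * i + 0)) x = x"
        by (rule trans[OF funpow_mult_period]) (use per x in auto)
      moreover have "p ^ e * i = (p ^ e * i - i) + i" using qpos by (cases "p ^ e") auto
      ultimately have "(f ^^ (p ^ e * i - i)) y = x" unfolding i
        by (metis add_0_right funpow_add o_apply)
      then show ?thesis unfolding Orb_def by (metis rangeI)
    qed
    moreover have "\<And>z. z \<in> Orb y \<Longrightarrow> Orb z \<subseteq> Orb y"
      unfolding Orb_def by (auto, metis comp_apply funpow_add rangeI)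
    ultimately show "Orb y = Orb x" by blast
  qed
  have U: "\<Union> (Orb ` W') = W'"
  proof
    show "\<Union> (Orb ` W') \<subseteq> W'" using Osub by auto
    show "W' \<subseteq> \<Union> (Orb ` W')" unfolding Orb_def
      by clarify (metis UN_iff funpow_0 image_eqI rangeI)
  qed
  have "p dvd card (\<Union> (Orb ` W'))"
  proof (rule dvd_partition)
    show "finite (\<Union> (Orb ` W'))" using U fin W'_def by simp
    show "\<forall>c\<in>Orb ` W'. p dvd card c" using Ox by auto
    show "\<forall>c1\<in>Orb ` W'. \<forall>c2\<in>Orb ` W'. c1 \<noteq> c2 \<longrightarrow> c1 \<inter> c2 = {}"
    proof (intro ballI impI)
      fix c1 c2 assume c1: "c1 \<in> Orb ` W'" and c2: "c2 \<in> Orb ` W'" and ne: "c1 \<noteq> c2"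
      obtain x1 where x1: "x1 \<in> W'" "c1 = Orb x1" using c1 by auto
      obtain x2 where x2: "x2 \<in> W'" "c2 = Orb x2" using c2 by auto
      show "c1 \<inter> c2 = {}"
      proof (rule ccontr)
        assume "c1 \<inter> c2 \<noteq> {}"
        then obtain y where "y \<in> Orb x1" "y \<in> Orb x2" using x1 x2 by auto
        then have "Orb y = Orb x1" "Orb y = Orb x2" using Oeq x1 x2 W'_def by auto
        then show False using ne x1 x2 by simp
      qed
    qed
  qed
  then have "p dvd card W - 1" using U W'_def x0 by (simp add: card_Diff_singleton fin)
  moreover have "card W > 0" using fin x0 card_gt_0_iff by blast
  ultimately have "p dvd 1" using dv dvd_diff_nat[of p "card W" "card W - 1"] by simp
  then show False using pr by simp
qed



lemma (in group) conj_hom: "y \<in> carrier G \<Longrightarrow> (\<lambda>x. inv y \<otimes> x \<otimes> y) \<in> hom G G"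
  unfolding hom_def apply (auto simp: m_assoc)
  by (metis inv_closed l_one m_assoc m_closed r_inv)

lemma (in group) tpow_in_A:
  assumes "normal A G" "G Mod A \<cong> integer_mod_group (p ^ n)" "p > 0" "t \<in> carrier G"
  shows "t [^] (p ^ n) \<in> A"
proof -
  interpret N: normal A G by fact
  have grpM: "group (G Mod A)" by (rule N.factorgroup_is_group)
  have "card (carrier (G Mod A)) = card (carrier (integer_mod_group (p ^ n)))"
    using iso_same_card[OF assms(2)] .
  also have "\<dots> = p ^ n" using assms(3) by (simp add: carrier_integer_mod_group flip: of_nat_power)
  finally have ord: "order (G Mod A) = p ^ n" by (simp add: order_def)
  have h: "(\<lambda>a. A #> a) \<in> hom G (G Mod A)" by (rule N.r_coset_hom_Mod)
  have tM: "A #> t \<in> carrier (G Mod A)" using h assms(4) by (auto simp: hom_def)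
  have "A #> (t [^] (p ^ n)) = (A #> t) [^]\<^bsub>G Mod A\<^esub> (p ^ n)"
    using hom_nat_pow[OF h assms(4) is_group grpM] .
  also have "\<dots> = \<one>\<^bsub>G Mod A\<^esub>" using group.pow_order_eq_1[OF grpM tM] ord by simp
  also have "\<dots> = A" by simp
  finally have e: "A #> (t [^] (p ^ n)) = A" .
  have "t [^] (p ^ n) \<in> A #> (t [^] (p ^ n))"
    by (rule rcos_self) (use assms(4) N.subgroup_axioms in auto)
  then show ?thesis using e by simp
qed

lemma (in group) decomp:
  assumes "normal A G" "t \<in> carrier G" "generate (G Mod A) {A #> t} = carrier (G Mod A)"
    "y \<in> carrier G"
  shows "\<exists>b\<in>A. \<exists>k::int. y = b \<otimes> t [^] k"
proof -
  interpret N: normal A G by fact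
  have grpM: "group (G Mod A)" by (rule N.factorgroup_is_group)
  have h: "(\<lambda>a. A #> a) \<in> hom G (G Mod A)" by (rule N.r_coset_hom_Mod)
  have tM: "A #> t \<in> carrier (G Mod A)" using h assms(2) by (auto simp: hom_def)
  have yM: "A #> y \<in> carrier (G Mod A)" using h assms(4) by (auto simp: hom_def)
  have "A #> y \<in> {(A #> t) [^]\<^bsub>G Mod A\<^esub> (k::int) | k. k \<in> UNIV}"
    using assms(3) group.generate_pow[OF grpM tM] yM by simp
  then obtain k :: int where k: "A #> y = (A #> t) [^]\<^bsub>G Mod A\<^esub> k"
    by blast
  also have "\<dots> = A #> (t [^] k)"
    using hom_int_pow[OF h assms(2) is_group grpM] by simp
  finally have e: "A #> y = A #> (t [^] k)" .
  have "y \<in> A #> y"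
    by (rule rcos_self) (use assms(4) N.subgroup_axioms in auto)
  then have "y \<in> A #> (t [^] k)" using e by simp
  then show ?thesis unfolding r_coset_def by auto
qed

lemma (in group) find_cd:
  assumes N: "normal A G" and HA: "comm_group (G\<lparr>carrier := A\<rparr>)" and fin: "finite A"
    and cardA: "card A = p ^ k" and pr: "Factorial_Ring.prime p"
    and t: "t \<in> carrier G" and tp: "t [^] (p ^ n) \<in> A"
    and a: "a \<in> A" "a [^] p = \<one>" "inv t \<otimes> a \<otimes> t \<noteq> a"
  shows "\<exists>c d. c \<in> A \<and> d \<in> A \<and> c [^] p = \<one> \<and> d [^] p = \<one> \<and> d \<noteq> \<one> \<and>
     inv t \<otimes> c \<otimes> t = c \<otimes> d \<and> inv t \<otimes> d \<otimes> t = d"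
proof -
  interpret N: normal A G by fact
  have AG: "\<And>x. x \<in> A \<Longrightarrow> x \<in> carrier G" using N.subset by blast
  have comm: "\<And>x y. x \<in> A \<Longrightarrow> y \<in> A \<Longrightarrow> x \<otimes> y = y \<otimes> x"
  proof -
    fix x y assume "x \<in> A" "y \<in> A"
    then have "x \<otimes>\<^bsub>G\<lparr>carrier := A\<rparr>\<^esub> y = y \<otimes>\<^bsub>G\<lparr>carrier := A\<rparr>\<^esub> x"
      using comm_monoid.m_comm[OF comm_group.axioms(1)[OF HA]] by auto
    then show "x \<otimes> y = y \<otimes> x" by simp
  qed
  define \<alpha> where "\<alpha> = (\<lambda>x. inv t \<otimes> x \<otimes> t)"
  have \<alpha>A: "\<And>x. x \<in> A \<Longrightarrow> \<alpha> x \<in> A" unfolding \<alpha>_def using N.inv_op_closed1 t by simp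
  have \<alpha>G: "\<And>x. x \<in> carrier G \<Longrightarrow> \<alpha> x \<in> carrier G" unfolding \<alpha>_def using t by simp
  have \<alpha>hom: "\<alpha> \<in> hom G G" unfolding \<alpha>_def by (rule conj_hom[OF t])
  have \<alpha>mult: "\<And>x y. x \<in> carrier G \<Longrightarrow> y \<in> carrier G \<Longrightarrow> \<alpha> (x \<otimes> y) = \<alpha> x \<otimes> \<alpha> y"
    using \<alpha>hom by (simp add: hom_mult)
  have \<alpha>inv: "\<And>x. x \<in> carrier G \<Longrightarrow> \<alpha> (inv x) = inv (\<alpha> x)"
    unfolding \<alpha>_def using t by (simp add: inv_mult_group m_assoc)
  have \<alpha>pow: "\<And>x m. x \<in> carrier G \<Longrightarrow> \<alpha> (x [^] (m::nat)) = \<alpha> x [^] m"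
    using hom_nat_pow[OF \<alpha>hom _ is_group is_group] by blast
  have \<alpha>1: "\<alpha> \<one> = \<one>" unfolding \<alpha>_def using t by simp
  have \<alpha>it: "\<And>m x. x \<in> carrier G \<Longrightarrow> (\<alpha> ^^ m) x = inv (t [^] m) \<otimes> x \<otimes> t [^] m"
  proof -
    fix m x assume x: "x \<in> carrier G"
    show "(\<alpha> ^^ m) x = inv (t [^] m) \<otimes> x \<otimes> t [^] m"
    proof (induction m)
      case 0 then show ?case using x by simp
    next
      case (Suc m)
      then show ?case using x t by (simp add: \<alpha>_def inv_mult_group m_assoc nat_pow_Suc2)
    qed
  qed
  have per: "\<forall>x\<in>A. (\<alpha> ^^ (p ^ n)) x = x"
  proof
    fix x assume x: "x \<in> A"
    define s where "s = t [^] (p ^ n)"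
    have s: "s \<in> A" using tp s_def by simp
    have "(\<alpha> ^^ (p ^ n)) x = inv s \<otimes> x \<otimes> s" using \<alpha>it AG x s_def by simp
    also have "\<dots> = inv s \<otimes> (s \<otimes> x)" using comm[OF x s] AG x s by (simp add: m_assoc)
    also have "\<dots> = x" using AG x s by (simp add: m_assoc[symmetric])
    finally show "(\<alpha> ^^ (p ^ n)) x = x" .
  qed
  define V where "V = {x \<in> A. x [^] p = \<one>}"
  define Nf where "Nf = (\<lambda>x. inv x \<otimes> \<alpha> x)"
  have NfA: "\<And>x. x \<in> A \<Longrightarrow> Nf x \<in> A" unfolding Nf_def using \<alpha>A by simp
  have NV: "\<And>x. x \<in> V \<Longrightarrow> Nf x \<in> V"
  proof -
    fix x assume x: "x \<in> V"
    then have xA: "x \<in> A" and xp: "x [^] p = \<one>" using V_def by auto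
    have "(inv x \<otimes> \<alpha> x) [^] p = inv x [^] p \<otimes> \<alpha> x [^] p"
      by (rule pow_mult_distrib) (use comm xA \<alpha>A AG in auto)
    also have "\<dots> = \<one>" using xA AG xp by (simp add: nat_pow_inv \<alpha>pow[symmetric] \<alpha>1)
    finally show "Nf x \<in> V" using NfA xA V_def Nf_def by simp
  qed
  have \<alpha>V: "\<And>x. x \<in> V \<Longrightarrow> \<alpha> x \<in> V"
  proof -
    fix x assume "x \<in> V"
    then have x: "x \<in> A" "x [^] p = \<one>" unfolding V_def by auto
    have "\<alpha> x [^] p = \<alpha> (x [^] p)" by (rule \<alpha>pow[OF AG[OF x(1)], symmetric])
    then show "\<alpha> x \<in> V" using x \<alpha>1 \<alpha>A unfolding V_def by simp
  qed
  have invV: "\<And>x. x \<in> V \<Longrightarrow> inv x \<in> V"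
    using AG unfolding V_def by (auto simp: nat_pow_inv)
  have multV: "\<And>x y. x \<in> V \<Longrightarrow> y \<in> V \<Longrightarrow> x \<otimes> y \<in> V"
  proof -
    fix x y assume "x \<in> V" "y \<in> V"
    then have xy: "x \<in> A" "y \<in> A" "x [^] p = \<one>" "y [^] p = \<one>" using V_def by auto
    have "(x \<otimes> y) [^] p = x [^] p \<otimes> y [^] p"
      by (rule pow_mult_distrib) (use comm xy AG in auto)
    then show "x \<otimes> y \<in> V" using xy AG V_def by simp
  qed
  have oneV: "\<one> \<in> V" unfolding V_def by simp
  have Nmult: "\<And>x y. x \<in> A \<Longrightarrow> y \<in> A \<Longrightarrow> Nf x \<otimes> Nf y = Nf (x \<otimes> y)"
  proof -
    fix x y assume x: "x \<in> A" and y: "y \<in> A"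
    have c1: "\<alpha> x \<otimes> inv y = inv y \<otimes> \<alpha> x" using comm \<alpha>A x y by simp
    have c2: "inv x \<otimes> inv y = inv y \<otimes> inv x" using comm x y by simp
    have "Nf x \<otimes> Nf y = inv x \<otimes> (\<alpha> x \<otimes> inv y) \<otimes> \<alpha> y"
      unfolding Nf_def using x y AG \<alpha>G by (simp add: m_assoc)
    also have "\<dots> = (inv x \<otimes> inv y) \<otimes> (\<alpha> x \<otimes> \<alpha> y)"
      unfolding c1 using x y AG \<alpha>G by (simp add: m_assoc)
    also have "\<dots> = Nf (x \<otimes> y)"
      unfolding c2 Nf_def using x y AG by (simp add: inv_mult_group \<alpha>mult)
    finally show "Nf x \<otimes> Nf y = Nf (x \<otimes> y)" .
  qed
  have Ninv: "\<And>x. x \<in> A \<Longrightarrow> inv (Nf x) = Nf (inv x)"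
  proof -
    fix x assume x: "x \<in> A"
    have "inv (Nf x) = inv (\<alpha> x) \<otimes> x" unfolding Nf_def using x AG \<alpha>G by (simp add: inv_mult_group)
    also have "\<dots> = x \<otimes> inv (\<alpha> x)" using comm \<alpha>A x by simp
    also have "\<dots> = Nf (inv x)" unfolding Nf_def using x AG by (simp add: \<alpha>inv)
    finally show "inv (Nf x) = Nf (inv x)" .
  qed
  have VA: "V \<subseteq> A" unfolding V_def by auto
  define W where "W = Nf ` V"
  have WA: "W \<subseteq> A" unfolding W_def using NfA VA by auto
  have sgW: "subgroup W G"
  proof (rule subgroupI)
    show "W \<subseteq> carrier G" using WA AG by auto
    show "W \<noteq> {}" using oneV W_def by auto
    show "\<And>x. x \<in> W \<Longrightarrow> inv x \<in> W" unfolding W_def using Ninv VA invV by auto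
    show "\<And>x y. x \<in> W \<Longrightarrow> y \<in> W \<Longrightarrow> x \<otimes> y \<in> W"
    proof -
      fix x y assume "x \<in> W" "y \<in> W"
      then obtain u v where uv: "u \<in> V" "v \<in> V" "x = Nf u" "y = Nf v" unfolding W_def by auto
      have "x \<otimes> y = Nf (u \<otimes> v)" using uv Nmult VA by auto
      then show "x \<otimes> y \<in> W" unfolding W_def using multV uv by auto
    qed
  qed
  have grpH: "group (G\<lparr>carrier := A\<rparr>)" by (rule subgroup_imp_group[OF N.subgroup_axioms])
  have sgWH: "subgroup W (G\<lparr>carrier := A\<rparr>)" by (rule subgroup_incl[OF sgW N.subgroup_axioms WA])
  have "card (rcosets\<^bsub>G\<lparr>carrier := A\<rparr>\<^esub> W) * card W = card A"
    using group.lagrange[OF grpH sgWH] by (simp add: order_def)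
  then have "card W dvd p ^ k" using cardA by (metis dvd_triv_right)
  then obtain i where i: "card W = p ^ i" using divides_primepow_nat[OF pr] by blast
  have Nf1: "Nf \<one> = \<one>" unfolding Nf_def using \<alpha>1 by simp
  have oneW: "\<one> \<in> W" unfolding W_def using oneV Nf1 by force
  have aV: "a \<in> V" using a V_def by simp
  have NaW: "Nf a \<in> W" unfolding W_def using aV by simp
  have Na1: "Nf a \<noteq> \<one>"
  proof
    assume "Nf a = \<one>"
    then have "a \<otimes> Nf a = a" using a AG by simp
    moreover have "a \<otimes> Nf a = \<alpha> a" unfolding Nf_def using a AG \<alpha>G by (simp add: m_assoc[symmetric])
    ultimately show False using a \<alpha>_def by simp
  qed
  have finW: "finite W" using WA fin finite_subset by blast
  have "card W \<noteq> 1"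
  proof
    assume "card W = 1"
    then obtain z where "W = {z}" by (rule card_1_singletonE)
    then show False using oneW NaW Na1 by auto
  qed
  then have "i \<noteq> 0" using i by auto
  then have dvW: "p dvd card W" using i by simp
  have \<alpha>W: "\<alpha> ` W \<subseteq> W"
  proof clarify
    fix x assume "x \<in> W"
    then obtain y where y: "y \<in> V" "x = Nf y" unfolding W_def by auto
    have yG: "y \<in> carrier G" using y VA AG by auto
    have "\<alpha> x = Nf (\<alpha> y)" unfolding y Nf_def using yG \<alpha>G by (simp add: \<alpha>mult \<alpha>inv)
    then show "\<alpha> x \<in> W" unfolding W_def using \<alpha>V y by auto
  qed
  have perW: "\<forall>x\<in>W. (\<alpha> ^^ (p ^ n)) x = x" using per WA by auto
  obtain d where d: "d \<in> W" "d \<noteq> \<one>" "\<alpha> d = d"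
    using fixpoint_mod_p[OF finW \<alpha>W perW pr dvW oneW \<alpha>1] by blast
  then obtain c where c: "c \<in> V" "d = Nf c" unfolding W_def by auto
  have cG: "c \<in> carrier G" using c VA AG by auto
  have "c \<otimes> d = \<alpha> c" unfolding c Nf_def using cG \<alpha>G by (simp add: m_assoc[symmetric])
  then have e1: "inv t \<otimes> c \<otimes> t = c \<otimes> d" unfolding \<alpha>_def by simp
  have e2: "inv t \<otimes> d \<otimes> t = d" using d(3) unfolding \<alpha>_def .
  have cV: "c \<in> A" "c [^] p = \<one>" using c(1) unfolding V_def by auto
  have "d \<in> V" using NV c by simp
  then have dV: "d \<in> A" "d [^] p = \<one>" unfolding V_def by auto
  show ?thesis
    apply (rule exI[of _ c], rule exI[of _ d])
    using cV dV d(2) e1 e2 by blast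
qed

lemma (in comm_group) keyid:
  assumes "c \<in> carrier G" "d \<in> carrier G"
  shows "(c \<otimes> d [^] (j::int)) [^] (i::int) \<otimes> d [^] (gi::int) \<otimes> (c [^] j \<otimes> d [^] (gj::int))
       = c [^] (i + j) \<otimes> d [^] (i * j + gi + gj)"
proof -
  have "(c \<otimes> d [^] j) [^] i = c [^] i \<otimes> d [^] (j * i)" using assms by (simp add: int_pow_distrib int_pow_pow)
  then show ?thesis using assms by (simp add: int_pow_mult m_ac mult.commute)
qed

lemma (in comm_group) final_step:
  assumes c: "c \<in> carrier G" and d: "d \<in> carrier G"
    and e1: "c \<otimes> c = c [^] (i::int) \<otimes> d [^] (gi::int)"
    and e2: "(c \<otimes> d) \<otimes> (c \<otimes> d) = (c \<otimes> d) [^] i \<otimes> d [^] gi"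
  shows "d [^] (i - 2) = \<one>"
proof -
  have "(c \<otimes> c) \<otimes> (d \<otimes> d) = (c \<otimes> d) \<otimes> (c \<otimes> d)" using c d by (simp add: m_ac)
  also have "\<dots> = c [^] i \<otimes> d [^] i \<otimes> d [^] gi" using e2 c d by (simp add: int_pow_distrib)
  also have "\<dots> = (c [^] i \<otimes> d [^] gi) \<otimes> d [^] i" using c d by (simp add: m_ac)
  also have "\<dots> = (c \<otimes> c) \<otimes> d [^] i" using e1 by simp
  finally have "(c \<otimes> c) \<otimes> (d \<otimes> d) = (c \<otimes> c) \<otimes> d [^] i" .
  then have dd: "d \<otimes> d = d [^] i" using Units_l_cancel[of "c \<otimes> c" "d \<otimes> d" "d [^] i"] c d Units_eq by simp
  have d2: "d [^] (2::int) = d \<otimes> d" using d by (simp add: int_pow_def2 numeral_2_eq_2)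
  show ?thesis using d by (simp add: int_pow_diff d2 dd)
qed

lemma int_half_sq: "2 * ((x::int) * (x - 1) div 2) = x * (x - 1)"
proof -
  have "even (x * (x - 1))" by auto
  then show ?thesis by simp
qed

lemma odd_prime_dvd_half:
  fixes p :: nat and x :: int
  assumes "odd p" "int p dvd 2 * x"
  shows "int p dvd x"
proof -
  obtain q where q: "p = 2 * q + 1" using assms(1) oddE by blast
  have "x = (int q + 1) * (2 * x) - x * int p" using q by (simp add: algebra_simps)
  moreover have "int p dvd (int q + 1) * (2 * x) - x * int p" using assms(2) by simp
  ultimately show ?thesis by simp
qed

lemma (in group) build_aut:
  fixes p :: nat
  assumes N: "normal A G" and HA: "comm_group (G\<lparr>carrier := A\<rparr>)"
    and pr: "Factorial_Ring.prime p" and p2: "p > 2"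
    and t: "t \<in> carrier G"
    and dec: "\<And>y. y \<in> carrier G \<Longrightarrow> \<exists>b\<in>A. \<exists>k::int. y = b \<otimes> t [^] k"
    and cA: "c \<in> A" and dA: "d \<in> A" and cp: "c [^] p = \<one>" and dp: "d [^] p = \<one>"
    and d1: "d \<noteq> \<one>" and tc: "inv t \<otimes> c \<otimes> t = c \<otimes> d" and td: "inv t \<otimes> d \<otimes> t = d"
  shows "\<exists>\<phi> \<in> iso G G. \<not> subgroup (twisted_class G \<phi>) G"
proof -
  interpret N: normal A G by fact
  have AG: "\<And>x. x \<in> A \<Longrightarrow> x \<in> carrier G" using N.subset by blast
  have cG: "c \<in> carrier G" and dG: "d \<in> carrier G" using AG cA dA by auto
  have powA: "\<And>x (k::int). x \<in> A \<Longrightarrow> x [^] k \<in> A"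
    using subgroup_int_pow_closed[OF N.subgroup_axioms] by blast
  have pc: "\<And>x (k::int). x \<in> A \<Longrightarrow> x [^]\<^bsub>G\<lparr>carrier := A\<rparr>\<^esub> k = x [^] k"
    using int_pow_consistent[OF N.subgroup_axioms] by simp
  have KI: "\<And>i j gi gj. (c \<otimes> d [^] (j::int)) [^] (i::int) \<otimes> d [^] (gi::int) \<otimes> (c [^] j \<otimes> d [^] (gj::int))
       = c [^] (i + j) \<otimes> d [^] (i * j + gi + gj)"
  proof -
    fix i j gi gj :: int
    show "(c \<otimes> d [^] j) [^] i \<otimes> d [^] gi \<otimes> (c [^] j \<otimes> d [^] gj)
       = c [^] (i + j) \<otimes> d [^] (i * j + gi + gj)"
      using comm_group.keyid[OF HA, of c d j i gi gj] cA dA by (simp add: pc powA N.m_closed)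
  qed
  have FS: "\<And>i gi. c \<otimes> c = c [^] (i::int) \<otimes> d [^] (gi::int) \<Longrightarrow>
     (c \<otimes> d) \<otimes> (c \<otimes> d) = (c \<otimes> d) [^] i \<otimes> d [^] gi \<Longrightarrow> d [^] (i - 2) = \<one>"
  proof -
    fix i gi :: int
    assume "c \<otimes> c = c [^] i \<otimes> d [^] gi" "(c \<otimes> d) \<otimes> (c \<otimes> d) = (c \<otimes> d) [^] i \<otimes> d [^] gi"
    then show "d [^] (i - 2) = \<one>"
      using comm_group.final_step[OF HA, of c d i gi] cA dA by (simp add: pc powA N.m_closed)
  qed
  define \<sigma> where "\<sigma> = (\<lambda>y x. inv y \<otimes> x \<otimes> y)"
  have \<sigma>mult: "\<And>y x z. y \<in> carrier G \<Longrightarrow> x \<in> carrier G \<Longrightarrow> z \<in> carrier G \<Longrightarrow>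
      \<sigma> y (x \<otimes> z) = \<sigma> y x \<otimes> \<sigma> y z"
    unfolding \<sigma>_def using hom_mult[OF conj_hom] by simp
  have \<sigma>pow: "\<And>y x (k::int). y \<in> carrier G \<Longrightarrow> x \<in> carrier G \<Longrightarrow> \<sigma> y (x [^] k) = \<sigma> y x [^] k"
  proof -
    fix y x and k :: int assume y: "y \<in> carrier G" and x: "x \<in> carrier G"
    show "\<sigma> y (x [^] k) = \<sigma> y x [^] k"
      unfolding \<sigma>_def using hom_int_pow[OF conj_hom[OF y] x is_group is_group] .
  qed
  have \<sigma>G: "\<And>y x. y \<in> carrier G \<Longrightarrow> x \<in> carrier G \<Longrightarrow> \<sigma> y x \<in> carrier G"
    unfolding \<sigma>_def by simp
  have \<sigma>comp: "\<And>y z x. y \<in> carrier G \<Longrightarrow> z \<in> carrier G \<Longrightarrow> x \<in> carrier G \<Longrightarrow>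
      \<sigma> (y \<otimes> z) x = \<sigma> z (\<sigma> y x)"
    unfolding \<sigma>_def by (simp add: inv_mult_group m_assoc)
  have \<sigma>inv: "\<And>u x. u \<in> carrier G \<Longrightarrow> x \<in> carrier G \<Longrightarrow> \<sigma> (inv u) (\<sigma> u x) = x"
    unfolding \<sigma>_def by (simp add: m_assoc[symmetric], simp add: m_assoc)
  have \<sigma>one: "\<And>x. x \<in> carrier G \<Longrightarrow> \<sigma> \<one> x = x" unfolding \<sigma>_def by simp
  have comm: "\<And>x y. x \<in> A \<Longrightarrow> y \<in> A \<Longrightarrow> x \<otimes> y = y \<otimes> x"
  proof -
    fix x y assume "x \<in> A" "y \<in> A"
    then have "x \<otimes>\<^bsub>G\<lparr>carrier := A\<rparr>\<^esub> y = y \<otimes>\<^bsub>G\<lparr>carrier := A\<rparr>\<^esub> x"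
      using comm_monoid.m_comm[OF comm_group.axioms(1)[OF HA]] by auto
    then show "x \<otimes> y = y \<otimes> x" by simp
  qed
  have \<sigma>A: "\<And>b x. b \<in> A \<Longrightarrow> x \<in> A \<Longrightarrow> \<sigma> b x = x"
  proof -
    fix b x assume b: "b \<in> A" and x: "x \<in> A"
    have "\<sigma> b x = inv b \<otimes> (b \<otimes> x)" unfolding \<sigma>_def using comm[OF x b] AG b x by (simp add: m_assoc)
    also have "\<dots> = x" using AG b x by (simp add: m_assoc[symmetric])
    finally show "\<sigma> b x = x" .
  qed
  have \<sigma>tc: "\<sigma> t c = c \<otimes> d" and \<sigma>td: "\<sigma> t d = d" unfolding \<sigma>_def using tc td by auto
  have tnat: "\<And>m::nat. \<sigma> (t [^] m) c = c \<otimes> d [^] (int m) \<and> \<sigma> (t [^] m) d = d"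
  proof -
    fix m :: nat show "\<sigma> (t [^] m) c = c \<otimes> d [^] (int m) \<and> \<sigma> (t [^] m) d = d"
    proof (induction m)
      case 0 then show ?case using \<sigma>one cG dG by simp
    next
      case (Suc m)
      have dm: "d [^] (int (Suc m)) = d \<otimes> d [^] (int m)"
        using int_pow_mult[OF dG, of 1 "int m"] dG by simp
      have "\<sigma> (t [^] Suc m) c = \<sigma> t (\<sigma> (t [^] m) c)" using \<sigma>comp t cG by simp
      also have "\<dots> = \<sigma> t c \<otimes> \<sigma> t (d [^] (int m))" using Suc.IH \<sigma>mult t cG dG by simp
      also have "\<dots> = c \<otimes> d [^] (int (Suc m))" using \<sigma>tc \<sigma>pow[OF t dG] \<sigma>td dm cG dG by (simp add: m_assoc)
      finally have 1: "\<sigma> (t [^] Suc m) c = c \<otimes> d [^] (int (Suc m))" .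
      have "\<sigma> (t [^] Suc m) d = \<sigma> t (\<sigma> (t [^] m) d)" using \<sigma>comp t dG by simp
      then have 2: "\<sigma> (t [^] Suc m) d = d" using Suc.IH \<sigma>td by simp
      show ?case using 1 2 by simp
    qed
  qed
  have tint: "\<And>k::int. \<sigma> (t [^] k) c = c \<otimes> d [^] k \<and> \<sigma> (t [^] k) d = d"
  proof -
    fix k :: int show "\<sigma> (t [^] k) c = c \<otimes> d [^] k \<and> \<sigma> (t [^] k) d = d"
    proof (cases k rule: int_cases)
      case (nonneg m) then show ?thesis using tnat[of m] by (simp add: int_pow_int)
    next
      case (neg m)
      define u where "u = t [^] (Suc m)"
      have uG: "u \<in> carrier G" using t u_def by simp
      have kk: "k = - int (Suc m)" using neg by simp
      have tk: "t [^] k = inv u" unfolding kk u_def by (rule int_pow_neg_int[OF t])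
      have "\<sigma> u (c \<otimes> d [^] k) = \<sigma> u c \<otimes> \<sigma> u (d [^] k)" using \<sigma>mult uG cG dG by simp
      also have "\<dots> = c \<otimes> d [^] (int (Suc m)) \<otimes> d [^] k"
        using tnat[of "Suc m"] \<sigma>pow[OF uG dG] u_def by simp
      also have "\<dots> = c" unfolding kk using cG dG
        by (simp add: m_assoc int_pow_mult[symmetric])
      finally have e: "\<sigma> u (c \<otimes> d [^] k) = c" .
      have "\<sigma> (t [^] k) c = c \<otimes> d [^] k" unfolding tk using \<sigma>inv[OF uG, of "c \<otimes> d [^] k"] e cG dG by simp
      moreover have "\<sigma> (t [^] k) d = d" unfolding tk using \<sigma>inv[OF uG dG] tnat[of "Suc m"] u_def by simp
      ultimately show ?thesis by simp
    qed
  qed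
  have act: "\<And>y. y \<in> carrier G \<Longrightarrow> \<sigma> y d = d \<and> (\<exists>m::int. \<sigma> y c = c \<otimes> d [^] m)"
  proof -
    fix y assume y: "y \<in> carrier G"
    obtain b k where bk: "b \<in> A" "y = b \<otimes> t [^] (k::int)" using dec[OF y] by blast
    have "\<And>x. x \<in> A \<Longrightarrow> \<sigma> y x = \<sigma> (t [^] k) x"
      using bk \<sigma>comp AG t \<sigma>A by simp
    then show "\<sigma> y d = d \<and> (\<exists>m::int. \<sigma> y c = c \<otimes> d [^] m)" using tint cA dA by auto
  qed
  have ordd: "ord d = p"
  proof -
    have "ord d dvd p" using pow_eq_id[OF dG] dp by simp
    moreover have "ord d \<noteq> 1" using ord_eq_1[OF dG] d1 by simp
    ultimately show ?thesis using pr prime_nat_iff by blast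
  qed
  have dpow1: "\<And>j::int. d [^] j = \<one> \<longleftrightarrow> int p dvd j" using int_pow_eq_id[OF dG] ordd by simp
  have xper: "\<And>x (i::int) j. x \<in> carrier G \<Longrightarrow> x [^] p = \<one> \<Longrightarrow> int p dvd (i - j) \<Longrightarrow> x [^] i = x [^] j"
  proof -
    fix x and i j :: int assume x: "x \<in> carrier G" and xp: "x [^] p = \<one>" and dv: "int p dvd (i - j)"
    have "ord x dvd p" using pow_eq_id[OF x] xp by simp
    then have "int (ord x) dvd (i - j)" using dv by (meson dvd_trans of_nat_dvd_iff)
    then have "x [^] (i - j) = \<one>" using int_pow_eq_id[OF x] by simp
    moreover have "x [^] i = x [^] j \<otimes> x [^] (i - j)" using int_pow_mult[OF x, of j "i - j"] by simp
    ultimately show "x [^] i = x [^] j" using x by simp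
  qed
  define g where "g = (\<lambda>i::int. i * (i - 1) div 2)"
  define f where "f = (\<lambda>i::int. c [^] i \<otimes> d [^] g i)"
  have fA: "\<And>i. f i \<in> A" unfolding f_def using powA cA dA by simp
  have oddp: "odd p" using prime_odd_nat pr p2 by blast
  have g2: "\<And>i. 2 * g i = i * (i - 1)" unfolding g_def by (rule int_half_sq)
  have gper: "\<And>i j. int p dvd (i - j) \<Longrightarrow> int p dvd (g i - g j)"
  proof -
    fix i j :: int assume dv: "int p dvd (i - j)"
    have "2 * (g i - g j) = (i - j) * (i + j - 1)" using g2[of i] g2[of j] by (simp add: algebra_simps)
    then have "int p dvd 2 * (g i - g j)" using dv by simp
    then show "int p dvd (g i - g j)" using odd_prime_dvd_half[OF oddp] by blast
  qed
  have fper: "\<And>i j. int p dvd (i - j) \<Longrightarrow> f i = f j"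
    unfolding f_def using xper[OF cG cp] xper[OF dG dp] gper by metis
  have gadd: "\<And>i j. g (i + j) = i * j + g i + g j"
  proof -
    fix i j :: int
    have "2 * g (i + j) = 2 * (i * j + g i + g j)" using g2[of "i + j"] g2[of i] g2[of j]
      by (simp add: algebra_simps)
    then show "g (i + j) = i * j + g i + g j" by simp
  qed
  define \<kappa> where "\<kappa> = (\<lambda>y. SOME m::int. \<sigma> y c = c \<otimes> d [^] m)"
  have K1: "\<And>y. y \<in> carrier G \<Longrightarrow> \<sigma> y c = c \<otimes> d [^] \<kappa> y"
  proof -
    fix y assume y: "y \<in> carrier G"
    obtain m :: int where "\<sigma> y c = c \<otimes> d [^] m" using act[OF y] by blast
    then show "\<sigma> y c = c \<otimes> d [^] \<kappa> y" unfolding \<kappa>_def by (rule someI)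
  qed
  have K2: "\<And>y m. y \<in> carrier G \<Longrightarrow> \<sigma> y c = c \<otimes> d [^] m \<Longrightarrow> int p dvd (m - \<kappa> y)"
  proof -
    fix y and m :: int assume y: "y \<in> carrier G" and e: "\<sigma> y c = c \<otimes> d [^] m"
    have "c \<otimes> d [^] m = c \<otimes> d [^] \<kappa> y" using e K1[OF y] by simp
    then have "d [^] m = d [^] \<kappa> y" using Units_l_cancel[of c "d [^] m" "d [^] \<kappa> y"] cG dG Units_eq by simp
    then have "d [^] (m - \<kappa> y) = \<one>" using dG by (simp add: int_pow_diff)
    then show "int p dvd (m - \<kappa> y)" using dpow1 by simp
  qed
  have \<sigma>d: "\<And>y (j::int). y \<in> carrier G \<Longrightarrow> \<sigma> y (d [^] j) = d [^] j" using \<sigma>pow act dG by simp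
  have \<sigma>f: "\<And>y i. y \<in> carrier G \<Longrightarrow> \<sigma> y (f i) = (c \<otimes> d [^] \<kappa> y) [^] i \<otimes> d [^] g i"
    unfolding f_def using \<sigma>mult \<sigma>pow K1 \<sigma>d cG dG by simp
  have Kmult: "\<And>z y. z \<in> carrier G \<Longrightarrow> y \<in> carrier G \<Longrightarrow> int p dvd (\<kappa> y + \<kappa> z - \<kappa> (z \<otimes> y))"
  proof -
    fix z y assume z: "z \<in> carrier G" and y: "y \<in> carrier G"
    have "\<sigma> (z \<otimes> y) c = \<sigma> y (\<sigma> z c)" using \<sigma>comp z y cG by simp
    also have "\<dots> = \<sigma> y c \<otimes> d [^] \<kappa> z" using K1[OF z] \<sigma>mult y cG dG \<sigma>d by simp
    also have "\<dots> = c \<otimes> d [^] (\<kappa> y + \<kappa> z)" using K1[OF y] cG dG by (simp add: m_assoc int_pow_mult)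
    finally show "int p dvd (\<kappa> y + \<kappa> z - \<kappa> (z \<otimes> y))" using K2 z y by simp
  qed
  have KA: "\<And>b. b \<in> A \<Longrightarrow> int p dvd \<kappa> b"
  proof -
    fix b assume b: "b \<in> A"
    have "\<sigma> b c = c \<otimes> d [^] (0::int)" using \<sigma>A b cA cG by simp
    then have "int p dvd (0 - \<kappa> b)" by (rule K2[OF AG[OF b]])
    then show "int p dvd \<kappa> b" by simp
  qed
  have Kt: "int p dvd (1 - \<kappa> t)" using K2[OF t, of 1] \<sigma>tc dG by simp
  define w where "w = (\<lambda>y. f (\<kappa> y))"
  define \<phi> where "\<phi> = (\<lambda>y. y \<otimes> w y)"
  have wA: "\<And>y. w y \<in> A" unfolding w_def using fA by simp
  have wG: "\<And>y. w y \<in> carrier G" using wA AG by simp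
  have wmult: "\<And>z y. z \<in> carrier G \<Longrightarrow> y \<in> carrier G \<Longrightarrow> w (z \<otimes> y) = f (\<kappa> z + \<kappa> y)"
  proof -
    fix z y assume z: "z \<in> carrier G" and y: "y \<in> carrier G"
    have "int p dvd (\<kappa> (z \<otimes> y) - (\<kappa> z + \<kappa> y))"
      using Kmult[OF z y] by (metis add.commute dvd_minus_iff minus_diff_eq)
    then show "w (z \<otimes> y) = f (\<kappa> z + \<kappa> y)" unfolding w_def using fper by blast
  qed
  have wAinv: "\<And>y b. y \<in> carrier G \<Longrightarrow> b \<in> A \<Longrightarrow> w (y \<otimes> b) = w y"
  proof -
    fix y b assume y: "y \<in> carrier G" and b: "b \<in> A"
    have "w (y \<otimes> b) = f (\<kappa> y + \<kappa> b)" using wmult y AG b by simp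
    also have "\<dots> = f (\<kappa> y)" using KA[OF b] fper by simp
    finally show "w (y \<otimes> b) = w y" unfolding w_def .
  qed
  have \<phi>G: "\<And>y. y \<in> carrier G \<Longrightarrow> \<phi> y \<in> carrier G" unfolding \<phi>_def using wG by simp
  have \<phi>mult: "\<And>z y. z \<in> carrier G \<Longrightarrow> y \<in> carrier G \<Longrightarrow> \<phi> (z \<otimes> y) = \<phi> z \<otimes> \<phi> y"
  proof -
    fix z y assume z: "z \<in> carrier G" and y: "y \<in> carrier G"
    have sw: "w z \<otimes> y = y \<otimes> \<sigma> y (w z)" unfolding \<sigma>_def using y wG by (simp add: m_assoc[symmetric])
    have "\<phi> z \<otimes> \<phi> y = z \<otimes> (w z \<otimes> y) \<otimes> w y" unfolding \<phi>_def using z y wG by (simp add: m_assoc)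
    also have "\<dots> = z \<otimes> y \<otimes> (\<sigma> y (w z) \<otimes> w y)" unfolding sw using z y wG \<sigma>G by (simp add: m_assoc)
    also have "\<sigma> y (w z) \<otimes> w y = (c \<otimes> d [^] \<kappa> y) [^] \<kappa> z \<otimes> d [^] g (\<kappa> z) \<otimes> (c [^] \<kappa> y \<otimes> d [^] g (\<kappa> y))"
      unfolding w_def using \<sigma>f[OF y] by (simp add: f_def)
    also have "\<dots> = f (\<kappa> z + \<kappa> y)" unfolding f_def KI gadd ..
    also have "f (\<kappa> z + \<kappa> y) = w (z \<otimes> y)" using wmult z y by simp
    finally show "\<phi> (z \<otimes> y) = \<phi> z \<otimes> \<phi> y" unfolding \<phi>_def by simp
  qed
  have inj: "inj_on \<phi> (carrier G)"
  proof (rule inj_onI)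
    fix z y assume z: "z \<in> carrier G" and y: "y \<in> carrier G" and e: "\<phi> z = \<phi> y"
    define b where "b = w y \<otimes> inv (w z)"
    have bA: "b \<in> A" unfolding b_def using wA by simp
    have "z = y \<otimes> b"
    proof -
      have "z \<otimes> w z = y \<otimes> w y" using e \<phi>_def by simp
      then have "z = y \<otimes> w y \<otimes> inv (w z)" using z y wG by (simp add: m_assoc[symmetric] inv_solve_right)
      then show ?thesis unfolding b_def using y wG by (simp add: m_assoc)
    qed
    then have "w z = w y" using wAinv y bA by simp
    then show "z = y" using e \<phi>_def z y wG by simp
  qed
  have surj: "\<phi> ` carrier G = carrier G"
  proof
    show "\<phi> ` carrier G \<subseteq> carrier G" using \<phi>G by auto
    show "carrier G \<subseteq> \<phi> ` carrier G"
    proof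
      fix y assume y: "y \<in> carrier G"
      have "w (y \<otimes> inv (w y)) = w y" using wAinv y wA by simp
      then have "\<phi> (y \<otimes> inv (w y)) = y" unfolding \<phi>_def using y wG by (simp add: m_assoc)
      moreover have "y \<otimes> inv (w y) \<in> carrier G" using y wG by simp
      ultimately show "y \<in> \<phi> ` carrier G" by force
    qed
  qed
  have iso: "\<phi> \<in> iso G G"
    unfolding iso_def hom_def bij_betw_def using \<phi>G \<phi>mult inj surj by auto
  have tceq: "\<And>z. z \<in> carrier G \<Longrightarrow> inv z \<otimes> \<phi> z = w z"
    unfolding \<phi>_def using wG by (simp add: m_assoc[symmetric])
  have TC: "twisted_class G \<phi> = w ` carrier G"
  proof (intro equalityI subsetI)
    fix x assume "x \<in> twisted_class G \<phi>"
    then obtain z where z: "z \<in> carrier G" "x = inv z \<otimes> \<phi> z" unfolding twisted_class_def by blast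
    then show "x \<in> w ` carrier G" using tceq by simp
  next
    fix x assume "x \<in> w ` carrier G"
    then obtain z where z: "z \<in> carrier G" "x = w z" by blast
    then have "x = inv z \<otimes> \<phi> z" using tceq by simp
    then show "x \<in> twisted_class G \<phi>" unfolding twisted_class_def using z by blast
  qed
  have wt: "w t = c"
  proof -
    have "w t = f 1" unfolding w_def using Kt fper by (metis dvd_minus_iff minus_diff_eq)
    also have "\<dots> = c" unfolding f_def g_def using cG by simp
    finally show ?thesis .
  qed
  have "\<not> subgroup (twisted_class G \<phi>) G"
  proof
    assume sg: "subgroup (twisted_class G \<phi>) G"
    have "c \<in> twisted_class G \<phi>" unfolding TC using wt t by force
    then have "c \<otimes> c \<in> twisted_class G \<phi>" using subgroup.m_closed[OF sg] by blast
    then obtain z where z: "z \<in> carrier G" "c \<otimes> c = w z" unfolding TC by auto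
    define i where "i = \<kappa> z"
    have e1: "c \<otimes> c = c [^] i \<otimes> d [^] g i" using z unfolding w_def f_def i_def by simp
    have dkt: "d [^] \<kappa> t = d" using xper[OF dG dp, of "\<kappa> t" 1] Kt dG
      by (metis dvd_minus_iff int_pow_1 minus_diff_eq)
    have "(c \<otimes> d) \<otimes> (c \<otimes> d) = \<sigma> t (c \<otimes> c)" using \<sigma>mult t cG \<sigma>tc by simp
    also have "\<dots> = \<sigma> t (f i)" using z unfolding w_def i_def by simp
    also have "\<dots> = (c \<otimes> d) [^] i \<otimes> d [^] g i" using \<sigma>f[OF t] dkt by simp
    finally have e2: "(c \<otimes> d) \<otimes> (c \<otimes> d) = (c \<otimes> d) [^] i \<otimes> d [^] g i" .
    have "d [^] (i - 2) = \<one>" using FS[OF e1 e2] .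
    then have "int p dvd (i - 2)" using dpow1 by simp
    then have "f i = f 2" using fper by simp
    also have "\<dots> = (c \<otimes> c) \<otimes> d" unfolding f_def g_def using cG dG
      by (simp add: int_pow_def2 numeral_2_eq_2)
    finally have "c \<otimes> c = (c \<otimes> c) \<otimes> d" using z unfolding w_def i_def by simp
    then have "d = \<one>" using cG dG by simp
    then show False using d1 by simp
  qed
  then show ?thesis using iso by blast
qed


theorem mainTheorem11:
  fixes G :: "('a, 'b) monoid_scheme" and A :: "'a set" and t :: 'a and p n :: nat
  assumes "group G"
    and "Factorial_Ring.prime p" and "p > 2" and "n \<ge> 1"
    and "A \<lhd> G"
    and "finite A"
    and "comm_group (G\<lparr>carrier := A\<rparr>)"
    and "\<exists>k. card A = p ^ k"
    and "G Mod A \<cong> integer_mod_group (p ^ n)"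
    and "t \<in> carrier G"
    and "generate (G Mod A) {A #>\<^bsub>G\<^esub> t} = carrier (G Mod A)"
    and "\<forall>\<phi> \<in> iso G G. subgroup (twisted_class G \<phi>) G"
  shows "\<forall>a \<in> Omega G p 1 A. inv\<^bsub>G\<^esub> t \<otimes>\<^bsub>G\<^esub> a \<otimes>\<^bsub>G\<^esub> t = a"
proof
  fix a assume a: "a \<in> Omega G p 1 A"
  show "inv\<^bsub>G\<^esub> t \<otimes>\<^bsub>G\<^esub> a \<otimes>\<^bsub>G\<^esub> t = a"
  proof (rule ccontr)
    assume ne: "inv\<^bsub>G\<^esub> t \<otimes>\<^bsub>G\<^esub> a \<otimes>\<^bsub>G\<^esub> t \<noteq> a"
    have p0: "p > 0" using assms(3) by simp
    have tp: "t [^]\<^bsub>G\<^esub> (p ^ n) \<in> A"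
      by (rule group.tpow_in_A[OF assms(1) assms(5) assms(9) p0 assms(10)])
    obtain k where cardA: "card A = p ^ k" using assms(8) by blast
    have aA: "a \<in> A" and ap: "a [^]\<^bsub>G\<^esub> p = \<one>\<^bsub>G\<^esub>" using a unfolding Omega_def by auto
    obtain c d where cd: "c \<in> A" "d \<in> A" "c [^]\<^bsub>G\<^esub> p = \<one>\<^bsub>G\<^esub>" "d [^]\<^bsub>G\<^esub> p = \<one>\<^bsub>G\<^esub>"
       "d \<noteq> \<one>\<^bsub>G\<^esub>" "inv\<^bsub>G\<^esub> t \<otimes>\<^bsub>G\<^esub> c \<otimes>\<^bsub>G\<^esub> t = c \<otimes>\<^bsub>G\<^esub> d"
       "inv\<^bsub>G\<^esub> t \<otimes>\<^bsub>G\<^esub> d \<otimes>\<^bsub>G\<^esub> t = d"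
      using group.find_cd[OF assms(1) assms(5) assms(7) assms(6) cardA assms(2) assms(10) tp aA ap ne]
      by blast
    have dec: "\<And>y. y \<in> carrier G \<Longrightarrow> \<exists>b\<in>A. \<exists>k::int. y = b \<otimes>\<^bsub>G\<^esub> t [^]\<^bsub>G\<^esub> k"
      using group.decomp[OF assms(1) assms(5) assms(10) assms(11)] by blast
    obtain \<phi> where "\<phi> \<in> iso G G" "\<not> subgroup (twisted_class G \<phi>) G"
      using group.build_aut[OF assms(1) assms(5) assms(7) assms(2) assms(3) assms(10) dec cd] by blast
    then show False using assms(12) by blast
  qed
qed

end
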